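(* In the stochastic opinion dynamics described below, for every agent $i$, almost surely $\psi_{i,t}=0$ for infinitely many $t$ and $\psi_{i,t}=1$ for infinitely many $t$.
   Context: Let $A=(a_{i,j})$ be a symmetric $n\times n$ matrix with nonnegative entries, the weighted adjacency matrix of an undirected graph $G$ on $\{1,\dots,n\}$ (self-loops allowed) that is connected and not bipartite; let $\deg(i)=\sum_j a_{i,j}$. Each agent $i$ has a bias parameter $\gamma_i>0$, and $\mathrm{diag}(\gamma_1,\dots,\gamma_n)\neq I$. Define $f(\mu,\gamma)=\frac{\gamma\mu}{1+(\gamma-1)\mu}$ for $\mu\in[0,1]$, and for $\beta\in[0,1]^n$ let $\mu_i(\beta)=\frac{1}{\deg(i)}\sum_j a_{i,j}\beta_j$. Dynamics: $\beta_i(1)\in(0,1)$ are given initial values. For each $t\ge1$, conditionally on the history $\mathcal{H}_t$ (all declarations up to time $t$), the declarations $\psi_{i,t+1}\in\{0,1\}$, $i=1,\dots,n$, are independent with $\mathbb{P}[\psi_{i,t+1}=1\mid\mathcal{H}_t]=f(\mu_i(\beta(t)),\gamma_i)$, and $\beta_i(t+1)=\frac{t}{t+1}\beta_i(t)+\frac{1}{t+1}\psi_{i,t+1}$. *)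

theory Defs
  imports "HOL-Probability.Probability"
begin

text \<open>Agents are 0..n-1. A is the weighted adjacency matrix (only entries with
indices below n matter).\<close>

definition edge_rel :: "nat \<Rightarrow> (nat \<Rightarrow> nat \<Rightarrow> real) \<Rightarrow> (nat \<times> nat) set" where
  "edge_rel n A = {(i, j). i < n \<and> j < n \<and> A i j > 0}"

definition graph_connected :: "nat \<Rightarrow> (nat \<Rightarrow> nat \<Rightarrow> real) \<Rightarrow> bool" where
  "graph_connected n A \<longleftrightarrow> (\<forall>i<n. \<forall>j<n. (i, j) \<in> (edge_rel n A)\<^sup>*)"

definition graph_bipartite :: "nat \<Rightarrow> (nat \<Rightarrow> nat \<Rightarrow> real) \<Rightarrow> bool" where
  "graph_bipartite n A \<longleftrightarrow>
     (\<exists>c :: nat \<Rightarrow> bool. \<forall>i<n. \<forall>j<n. A i j > 0 \<longrightarrow> c i \<noteq> c j)"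

definition deg :: "nat \<Rightarrow> (nat \<Rightarrow> nat \<Rightarrow> real) \<Rightarrow> nat \<Rightarrow> real" where
  "deg n A i = (\<Sum>j<n. A i j)"

definition mu :: "nat \<Rightarrow> (nat \<Rightarrow> nat \<Rightarrow> real) \<Rightarrow> (nat \<Rightarrow> real) \<Rightarrow> nat \<Rightarrow> real" where
  "mu n A \<beta> i = (1 / deg n A i) * (\<Sum>j<n. A i j * \<beta> j)"

definition fbias :: "real \<Rightarrow> real \<Rightarrow> real" where
  "fbias \<mu> \<gamma> = \<gamma> * \<mu> / (1 + (\<gamma> - 1) * \<mu>)"

text \<open>Empirical opinion beta_i(t), computed from the initial values b and a
history h of declarations (h i s = psi_{i,s}, used for s = 2..t).
beta_i(1) = b i; beta_i(t+1) = t/(t+1) beta_i(t) + 1/(t+1) psi_{i,t+1}.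
The value at t = 0 is a dummy.\<close>

fun beta :: "(nat \<Rightarrow> real) \<Rightarrow> (nat \<Rightarrow> nat \<Rightarrow> bool) \<Rightarrow> nat \<Rightarrow> nat \<Rightarrow> real" where
  "beta b h i 0 = b i"
| "beta b h i (Suc 0) = b i"
| "beta b h i (Suc (Suc t)) =
     real (Suc t) / real (Suc (Suc t)) * beta b h i (Suc t)
     + (1 / real (Suc (Suc t))) * (if h i (Suc (Suc t)) then 1 else 0)"

end

theory Submission
  imports Defs "HOL-Analysis.Harmonic_Numbers"
begin

locale dynm = prob_space M for M :: "'a measure" +
  fixes n :: nat and psi :: "nat \<Rightarrow> nat \<Rightarrow> 'a \<Rightarrow> bool"
    and P :: "(nat \<Rightarrow> nat \<Rightarrow> bool) \<Rightarrow> nat \<Rightarrow> nat \<Rightarrow> real"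
  assumes meas: "\<And>j t. j < n \<Longrightarrow> 2 \<le> t \<Longrightarrow> psi j t \<in> measurable M (count_space UNIV)"
  and dyn: "\<And>t h x. 1 \<le> t \<Longrightarrow>
       measure M {\<omega> \<in> space M. (\<forall>s\<in>{2..t}. \<forall>j<n. psi j s \<omega> = h j s)
                                  \<and> (\<forall>j<n. psi j (t + 1) \<omega> = x j)}
       = measure M {\<omega> \<in> space M. \<forall>s\<in>{2..t}. \<forall>j<n. psi j s \<omega> = h j s}
         * (\<Prod>j<n. if x j then P h t j else 1 - P h t j)"
begin

lemma sets_psi: "j < n \<Longrightarrow> 2 \<le> s \<Longrightarrow> {\<omega> \<in> space M. psi j s \<omega> = c} \<in> sets M"
proof -
  assume "j < n" "2 \<le> s"
  from measurable_sets[OF meas[OF this], of "{c}"]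
  show ?thesis by (simp add: vimage_def Int_def conj_commute)
qed

definition cyl :: "nat \<Rightarrow> (nat \<Rightarrow> nat \<Rightarrow> bool) \<Rightarrow> 'a set" where
  "cyl N h = {\<omega> \<in> space M. \<forall>s\<in>{2..N}. \<forall>j<n. psi j s \<omega> = h j s}"

lemma sets_cyl: "cyl N h \<in> sets M"
proof -
  have "cyl N h = {\<omega> \<in> space M. \<forall>s\<in>{2..N}. \<forall>j\<in>{..<n}. psi j s \<omega> = h j s}"
    unfolding cyl_def by auto
  also have "\<dots> \<in> sets M"
    by (intro sets.sets_Collect_countable_All' sets_psi) auto
  finally show ?thesis .
qed

lemma sets_cyl_i: "i < n \<Longrightarrow> 1 \<le> N \<Longrightarrow> {\<omega> \<in> cyl N h. psi i (N+1) \<omega> = v} \<in> sets M"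
proof -
  assume a: "i < n" "1 \<le> N"
  have "{\<omega> \<in> cyl N h. psi i (N+1) \<omega> = v} = cyl N h \<inter> {\<omega> \<in> space M. psi i (N+1) \<omega> = v}"
    unfolding cyl_def by auto
  also have "\<dots> \<in> sets M" using a by (intro sets.Int sets_cyl sets_psi) auto
  finally show ?thesis .
qed

definition hist :: "nat \<Rightarrow> 'a \<Rightarrow> (nat \<times> nat) set" where
  "hist N \<omega> = {(j, s). j < n \<and> s \<in> {2..N} \<and> psi j s \<omega>}"

definition hS :: "(nat \<times> nat) set \<Rightarrow> nat \<Rightarrow> nat \<Rightarrow> bool" where
  "hS S = (\<lambda>j s. (j, s) \<in> S)"

lemma hist_sub: "hist N \<omega> \<subseteq> {..<n} \<times> {2..N}"
  unfolding hist_def by auto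

lemma cyl_hist: "S \<subseteq> {..<n} \<times> {2..N} \<Longrightarrow> \<omega> \<in> cyl N (hS S) \<Longrightarrow> hist N \<omega> = S"
  unfolding cyl_def hist_def hS_def by auto

lemma in_cyl_hist: "\<omega> \<in> space M \<Longrightarrow> \<omega> \<in> cyl N (hS (hist N \<omega>))"
  unfolding cyl_def hist_def hS_def by auto

lemma prod_half:
  assumes "i < n"
  shows "(\<Prod>j<n. if j = i then d else 1/2) = d * (1/2::real)^(n-1)"
proof -
  have "(\<Prod>j<n. if j = i then d else (1/2::real)) = (if i = i then d else 1/2) * (\<Prod>j\<in>{..<n}-{i}. if j = i then d else 1/2)"
    using assms by (subst prod.remove[of _ i]) auto
  also have "(\<Prod>j\<in>{..<n}-{i}. if j = i then d else (1/2::real)) = (\<Prod>j\<in>{..<n}-{i}. 1/2)"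
    by (intro prod.cong) auto
  also have "\<dots> = (1/2)^(n-1)" using assms by simp
  finally show ?thesis by simp
qed

lemma step_cyl:
  assumes N1: "1 \<le> N" and i: "i < n" and d0: "0 \<le> d"
    and dP: "\<And>h. d \<le> (if v then P h N i else 1 - P h N i)"
  shows "d * (1/2)^(n-1) * measure M (cyl N h) \<le> measure M {\<omega> \<in> cyl N h. psi i (N+1) \<omega> = v}"
proof -
  define x0 where "x0 = (\<lambda>j. if j = i then v else 1/2 \<le> P h N j)"
  have "d * (1/2)^(n-1) = (\<Prod>j<n. if j = i then d else 1/2)"
    using prod_half[OF i] by simp
  also have "\<dots> \<le> (\<Prod>j<n. if x0 j then P h N j else 1 - P h N j)"
  proof (rule prod_mono)
    fix j assume "j \<in> {..<n}"
    show "0 \<le> (if j = i then d else 1 / 2) \<and>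
         (if j = i then d else 1 / 2) \<le> (if x0 j then P h N j else 1 - P h N j)"
      using d0 dP[of h] unfolding x0_def by auto
  qed
  finally have pr: "d * (1/2)^(n-1) \<le> (\<Prod>j<n. if x0 j then P h N j else 1 - P h N j)" .
  have "d * (1/2)^(n-1) * measure M (cyl N h) \<le> measure M (cyl N h) * (\<Prod>j<n. if x0 j then P h N j else 1 - P h N j)"
    using pr by (simp add: mult.commute mult_left_mono)
  also have "\<dots> = measure M {\<omega> \<in> cyl N h. \<forall>j<n. psi j (N+1) \<omega> = x0 j}"
    using dyn[OF N1, of h x0] unfolding cyl_def by simp
  also have "\<dots> \<le> measure M {\<omega> \<in> cyl N h. psi i (N+1) \<omega> = v}"
    by (rule finite_measure_mono) (use i sets_cyl_i[OF i N1] in \<open>auto simp: x0_def\<close>)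
  finally show ?thesis .
qed

lemma step_R:
  assumes N1: "1 \<le> N" and i: "i < n" and d0: "0 \<le> d"
    and dP: "\<And>h. d \<le> (if v then P h N i else 1 - P h N i)"
  shows "d * (1/2)^(n-1) * measure M {\<omega> \<in> space M. R (hist N \<omega>)}
     \<le> measure M {\<omega> \<in> space M. R (hist N \<omega>) \<and> psi i (N+1) \<omega> = v}"
proof -
  define Q where "Q = {S \<in> Pow ({..<n} \<times> {2..N}). R S}"
  have fQ: "finite Q" unfolding Q_def by auto
  have E1: "{\<omega> \<in> space M. R (hist N \<omega>)} = (\<Union>S\<in>Q. cyl N (hS S))"
  proof (intro equalityI subsetI)
    fix \<omega> assume "\<omega> \<in> {\<omega> \<in> space M. R (hist N \<omega>)}"
    then show "\<omega> \<in> (\<Union>S\<in>Q. cyl N (hS S))"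
      using in_cyl_hist[of \<omega> N] hist_sub[of N \<omega>] unfolding Q_def by auto
  next
    fix \<omega> assume "\<omega> \<in> (\<Union>S\<in>Q. cyl N (hS S))"
    then obtain S where "S \<in> Q" "\<omega> \<in> cyl N (hS S)" by auto
    then show "\<omega> \<in> {\<omega> \<in> space M. R (hist N \<omega>)}"
      using cyl_hist[of S N \<omega>] unfolding Q_def by (auto simp: cyl_def)
  qed
  have E2: "{\<omega> \<in> space M. R (hist N \<omega>) \<and> psi i (N+1) \<omega> = v} = (\<Union>S\<in>Q. {\<omega> \<in> cyl N (hS S). psi i (N+1) \<omega> = v})"
    using E1 by blast
  have disj1: "disjoint_family_on (\<lambda>S. cyl N (hS S)) Q"
    unfolding disjoint_family_on_def Q_def using cyl_hist by blast
  have disj2: "disjoint_family_on (\<lambda>S. {\<omega> \<in> cyl N (hS S). psi i (N+1) \<omega> = v}) Q"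
    unfolding disjoint_family_on_def Q_def using cyl_hist by blast
  have "d * (1/2)^(n-1) * measure M {\<omega> \<in> space M. R (hist N \<omega>)}
      = (\<Sum>S\<in>Q. d * (1/2)^(n-1) * measure M (cyl N (hS S)))"
    unfolding E1 by (subst finite_measure_finite_Union[OF fQ _ disj1]) (auto simp: sets_cyl sum_distrib_left)
  also have "\<dots> \<le> (\<Sum>S\<in>Q. measure M {\<omega> \<in> cyl N (hS S). psi i (N+1) \<omega> = v})"
    by (intro sum_mono step_cyl[OF N1 i d0 dP])
  also have "\<dots> = measure M {\<omega> \<in> space M. R (hist N \<omega>) \<and> psi i (N+1) \<omega> = v}"
    unfolding E2 by (subst finite_measure_finite_Union[OF fQ _ disj2]) (use sets_cyl_i[OF i N1] in auto)
  finally show ?thesis .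
qed

lemma sets_F: "i < n \<Longrightarrow> 2 \<le> T \<Longrightarrow> {\<omega> \<in> space M. \<forall>s\<in>{T..N}. psi i s \<omega> \<noteq> v} \<in> sets M"
  by (intro sets.sets_Collect_countable_All') (use sets_psi[of i _ "\<not> v"] in auto)

lemma F_bound:
  assumes i: "i < n" and T: "2 \<le> T" and c0: "0 < c" and c1: "c \<le> 1"
    and cP: "\<And>h t. 1 \<le> t \<Longrightarrow> c / t \<le> (if v then P h t i else 1 - P h t i)"
    and N: "1 \<le> N"
  shows "measure M {\<omega> \<in> space M. \<forall>s\<in>{T..N}. psi i s \<omega> \<noteq> v}
          \<le> (\<Prod>k\<in>{T-1..<N}. 1 - c * (1/2)^(n-1) / real k)"
  using N
proof (induction N rule: nat_induct_at_least)
  case base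
  have "{T-1..<1} = {}" using T by auto
  then show ?case by simp
next
  case (Suc N)
  show ?case
  proof (cases "Suc N < T")
    case True
    then have "{T-1..<Suc N} = {}" by auto
    then show ?thesis by simp
  next
    case False
    let ?F = "{\<omega> \<in> space M. \<forall>s\<in>{T..N}. psi i s \<omega> \<noteq> v}"
    let ?G = "{\<omega> \<in> space M. (\<forall>s\<in>{T..N}. psi i s \<omega> \<noteq> v) \<and> psi i (N+1) \<omega> = v}"
    define R where "R = (\<lambda>S. \<forall>s\<in>{T..N}. ((i, s) \<in> S) \<noteq> v)"
    have hR: "\<And>\<omega>. R (hist N \<omega>) = (\<forall>s\<in>{T..N}. psi i s \<omega> \<noteq> v)"
      unfolding R_def hist_def using i T by auto
    have eqF: "{\<omega> \<in> space M. \<forall>s\<in>{T..Suc N}. psi i s \<omega> \<noteq> v} = ?F - ?G"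
    proof (intro set_eqI)
      fix x
      have "(\<forall>s\<in>{T..Suc N}. psi i s x \<noteq> v) = ((\<forall>s\<in>{T..N}. psi i s x \<noteq> v) \<and> psi i (Suc N) x \<noteq> v)"
        using False by (auto simp: le_Suc_eq)
      then show "x \<in> {\<omega> \<in> space M. \<forall>s\<in>{T..Suc N}. psi i s \<omega> \<noteq> v} \<longleftrightarrow> x \<in> ?F - ?G"
        by (simp only: mem_Collect_eq Diff_iff Suc_eq_plus1) auto
    qed
    have Gs: "?G \<in> sets M"
    proof -
      have "?G = ?F \<inter> {\<omega> \<in> space M. psi i (N+1) \<omega> = v}" by auto
      also have "\<dots> \<in> sets M" using Suc.hyps i T by (intro sets.Int sets_F sets_psi) auto
      finally show ?thesis .
    qed
    have c': "0 \<le> c / N" using c0 by simp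
    have st: "c / N * (1/2)^(n-1) * measure M ?F \<le> measure M ?G"
      using step_R[OF Suc.hyps i c', of v R] cP[of N] Suc.hyps unfolding hR by auto
    have "measure M {\<omega> \<in> space M. \<forall>s\<in>{T..Suc N}. psi i s \<omega> \<noteq> v} = measure M ?F - measure M ?G"
      unfolding eqF by (rule finite_measure_Diff) (use Gs sets_F[OF i T] in auto)
    also have "\<dots> \<le> measure M ?F - c / N * (1/2)^(n-1) * measure M ?F" using st by simp
    also have "\<dots> = (1 - c * (1/2)^(n-1) / N) * measure M ?F" by (simp add: algebra_simps)
    also have "\<dots> \<le> (1 - c * (1/2)^(n-1) / N) * (\<Prod>k\<in>{T-1..<N}. 1 - c * (1/2)^(n-1) / real k)"
    proof (rule mult_left_mono[OF Suc.IH])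
      have "(1/2::real)^(n-1) \<le> 1" by (simp add: power_le_one)
      then have "c * (1/2)^(n-1) \<le> 1 * 1" using c0 c1 by (intro mult_mono) auto
      also have "1 * 1 \<le> real N" using Suc.hyps by simp
      finally show "0 \<le> 1 - c * (1/2)^(n-1) / N" using Suc.hyps by (simp add: field_simps)
    qed
    also have "\<dots> = (\<Prod>k\<in>{T-1..<Suc N}. 1 - c * (1/2)^(n-1) / real k)"
      using False by (subst prod.atLeastLessThan_Suc) (auto simp: mult.commute)
    finally show ?thesis .
  qed
qed

lemma harm_diff_le:
  assumes m1: "1 \<le> m" and mN: "m \<le> N"
  shows "(harm N :: real) - harm m \<le> (\<Sum>k\<in>{m..<N}. 1 / real k)"
  using mN
proof (induction N rule: nat_induct_at_least)
  case base then show ?case by simp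
next
  case (Suc N)
  have "(harm (Suc N) :: real) - harm m = (harm N - harm m) + 1 / real (Suc N)"
    by (simp add: harm_Suc field_simps)
  also have "\<dots> \<le> (\<Sum>k\<in>{m..<N}. 1 / real k) + 1 / real N"
    using Suc m1 by (intro add_mono) (auto simp: frac_le)
  also have "\<dots> = (\<Sum>k\<in>{m..<Suc N}. 1 / real k)" using Suc by simp
  finally show ?case .
qed

lemma prod_le_exp:
  fixes x :: "nat \<Rightarrow> real"
  assumes "\<And>k. k \<in> A \<Longrightarrow> x k \<le> 1" "finite A"
  shows "(\<Prod>k\<in>A. 1 - x k) \<le> exp (- (\<Sum>k\<in>A. x k))"
proof -
  have "(\<Prod>k\<in>A. 1 - x k) \<le> (\<Prod>k\<in>A. exp (- x k))"
  proof (intro prod_mono conjI)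
    fix k assume "k \<in> A"
    then show "0 \<le> 1 - x k" using assms(1) by simp
    have "1 + (- x k) \<le> exp (- x k)" by (rule exp_ge_add_one_self)
    then show "1 - x k \<le> exp (- x k)" by simp
  qed
  also have "\<dots> = exp (- (\<Sum>k\<in>A. x k))" using exp_sum[OF assms(2), of "\<lambda>k. - x k"] by (simp add: sum_negf)
  finally show ?thesis .
qed

lemma AE_inf:
  assumes i: "i < n" and c0: "0 < c" and c1: "c \<le> 1"
    and cP: "\<And>h t. 1 \<le> t \<Longrightarrow> c / t \<le> (if v then P h t i else 1 - P h t i)"
  shows "AE \<omega> in M. infinite {t. psi i t \<omega> = v}"
proof -
  define c' where "c' = c * (1/2::real)^(n-1)"
  have c'0: "0 < c'" unfolding c'_def using c0 by simp
  have "(1/2::real)^(n-1) \<le> 1" by (simp add: power_le_one)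
  then have c'1: "c' \<le> 1" unfolding c'_def using c0 c1 by (metis mult_le_one less_imp_le zero_le_divide_1_iff zero_le_numeral zero_le_power)
  define G where "G T = {\<omega> \<in> space M. \<forall>s\<in>{T..}. psi i s \<omega> \<noteq> v}" for T
  have Gs: "G T \<in> sets M" if T: "2 \<le> T" for T
    unfolding G_def by (intro sets.sets_Collect_countable_All') (use sets_psi[of i _ "\<not> v"] i T in auto)
  have G0: "measure M (G T) = 0" if T: "2 \<le> T" for T
  proof -
    define m where "m = T - 1"
    have m1: "1 \<le> m" using T unfolding m_def by simp
    have bnd: "measure M (G T) \<le> exp (- (c' * (harm N - harm m)))" if N: "m \<le> N" for N
    proof -
      have "measure M (G T) \<le> measure M {\<omega> \<in> space M. \<forall>s\<in>{T..N}. psi i s \<omega> \<noteq> v}"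
        by (rule finite_measure_mono) (use sets_F[OF i T] in \<open>auto simp: G_def\<close>)
      also have "\<dots> \<le> (\<Prod>k\<in>{m..<N}. 1 - c' / real k)"
        using F_bound[OF i T c0 c1 cP, of N] N m1 unfolding m_def c'_def by auto
      also have "\<dots> \<le> exp (- (\<Sum>k\<in>{m..<N}. c' / real k))"
        by (rule prod_le_exp) (use c'1 m1 in \<open>auto simp: field_simps\<close>)
      also have "\<dots> \<le> exp (- (c' * (harm N - harm m)))"
      proof -
        have "c' * (harm N - harm m) \<le> c' * (\<Sum>k\<in>{m..<N}. 1 / real k)"
          using harm_diff_le[OF m1 N] c'0 by (intro mult_left_mono) auto
        also have "\<dots> = (\<Sum>k\<in>{m..<N}. c' / real k)" by (simp add: sum_distrib_left)
        finally show ?thesis by simp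
      qed
      finally show ?thesis .
    qed
    have lim: "(\<lambda>N. exp (- (c' * (harm N - harm m)))) \<longlonglongrightarrow> 0"
    proof -
      have "filterlim (\<lambda>N. - harm m + harm N :: real) at_top sequentially"
        by (rule filterlim_tendsto_add_at_top[OF tendsto_const harm_at_top])
      then have "filterlim (\<lambda>N. harm N - harm m :: real) at_top sequentially" by simp
      then have "filterlim (\<lambda>N. c' * (harm N - harm m) :: real) at_top sequentially"
        by (rule filterlim_tendsto_pos_mult_at_top[OF tendsto_const c'0])
      then have "filterlim (\<lambda>N. - (c' * (harm N - harm m)) :: real) at_bot sequentially"
        by (simp add: filterlim_uminus_at_top)
      then show ?thesis by (rule filterlim_compose[OF exp_at_bot])
    qed
    have "measure M (G T) \<le> 0"
      by (rule LIMSEQ_le_const[OF lim]) (use bnd in auto)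
    then show ?thesis by (simp add: measure_le_0_iff)
  qed
  have nul: "(\<Union>T. G (T + 2)) \<in> null_sets M"
  proof (rule null_sets_UN)
    fix T
    show "G (T + 2) \<in> null_sets M"
      using G0[of "T+2"] Gs[of "T+2"] by (auto simp: emeasure_eq_measure)
  qed
  show ?thesis
  proof (rule AE_I'[OF nul], rule subsetI)
    fix \<omega> assume "\<omega> \<in> {\<omega> \<in> space M. \<not> infinite {t. psi i t \<omega> = v}}"
    then have \<omega>: "\<omega> \<in> space M" and fin: "finite {t. psi i t \<omega> = v}" by auto
    then obtain k where k: "{t. psi i t \<omega> = v} \<subseteq> {..<k}" using finite_nat_bounded by blast
    have "\<omega> \<in> G (k + 2)" unfolding G_def using k \<omega> by auto
    then show "\<omega> \<in> (\<Union>T. G (T + 2))" by blast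
  qed
qed

end

lemma beta_bounds:
  assumes bb: "bm \<le> b k" "b k \<le> 1 - bm" and bm0: "0 \<le> bm"
  shows "bm / real (Suc t) \<le> beta b h k (Suc t) \<and> beta b h k (Suc t) \<le> 1 - bm / real (Suc t)"
proof (induction t)
  case 0
  then show ?case using bb by simp
next
  case (Suc t)
  define a where "a = real (Suc t)"
  define \<beta> where "\<beta> = beta b h k (Suc t)"
  define ind :: real where "ind = (if h k (Suc (Suc t)) then 1 else 0)"
  have a0: "0 < a" unfolding a_def by simp
  have ind: "0 \<le> ind" "ind \<le> 1" unfolding ind_def by auto
  have IH: "bm / a \<le> \<beta>" "\<beta> \<le> 1 - bm / a" using Suc unfolding a_def \<beta>_def by auto
  have eq: "beta b h k (Suc (Suc t)) = a / (a + 1) * \<beta> + 1 / (a + 1) * ind"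
    unfolding a_def \<beta>_def ind_def by simp
  have ra: "real (Suc (Suc t)) = a + 1" unfolding a_def by simp
  have "a / (a + 1) * (bm / a) \<le> a / (a + 1) * \<beta>"
    using IH a0 by (intro mult_left_mono) auto
  moreover have "a / (a + 1) * (bm / a) = bm / (a + 1)" using a0 by (simp add: field_simps)
  moreover have "0 \<le> 1 / (a + 1) * ind" using a0 ind by simp
  ultimately have lo: "bm / (a + 1) \<le> beta b h k (Suc (Suc t))" unfolding eq by linarith
  have "a / (a + 1) * \<beta> \<le> a / (a + 1) * (1 - bm / a)"
    using IH a0 by (intro mult_left_mono) auto
  moreover have "a / (a + 1) * (1 - bm / a) + 1 / (a + 1) = 1 - bm / (a + 1)"
  proof -
    have "a * (1 - bm / a) = a - bm" using a0 by (simp add: right_diff_distrib)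
    then have e1: "a / (a + 1) * (1 - bm / a) = (a - bm) / (a + 1)" by (metis times_divide_eq_left mult.commute)
    have "a / (a + 1) * (1 - bm / a) + 1 / (a + 1) = (a - bm) / (a + 1) + 1 / (a + 1)" by (simp only: e1)
    also have "\<dots> = (a + 1 - bm) / (a + 1)" by (simp add: add_divide_distrib[symmetric])
    also have "\<dots> = 1 - bm / (a + 1)" using a0 by (simp add: diff_divide_distrib)
    finally show ?thesis .
  qed
  moreover have "1 / (a + 1) * ind \<le> 1 / (a + 1) * 1" using a0 ind by (intro mult_left_mono) auto
  ultimately have hi: "beta b h k (Suc (Suc t)) \<le> 1 - bm / (a + 1)" unfolding eq by linarith
  show ?case using lo hi unfolding ra by simp
qed

lemma deg_pos:
  assumes nonneg: "\<forall>i<n. \<forall>j<n. A i j \<ge> 0"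
    and conn: "graph_connected n A"
    and nonbip: "\<not> graph_bipartite n A"
    and i: "i < n"
  shows "deg n A i > 0"
proof (rule ccontr)
  assume "\<not> deg n A i > 0"
  moreover have "deg n A i \<ge> 0" unfolding deg_def using nonneg i by (intro sum_nonneg) auto
  ultimately have "(\<Sum>j<n. A i j) = 0" unfolding deg_def by simp
  then have z: "\<forall>j<n. A i j = 0" using nonneg i by (subst (asm) sum_nonneg_eq_0_iff) auto
  show False
  proof (cases "\<exists>j<n. j \<noteq> i")
    case True
    then obtain j where j: "j < n" "j \<noteq> i" by auto
    have "(i, j) \<in> (edge_rel n A)\<^sup>*" using conn i j unfolding graph_connected_def by auto
    then show False
    proof (cases rule: converse_rtranclE)
      case base then show False using j by simp
    next
      case (step k)
      then show False using z unfolding edge_rel_def by auto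
    qed
  next
    case False
    then have "\<forall>j<n. j = i" by auto
    then have "graph_bipartite n A" unfolding graph_bipartite_def using z i
      by (intro exI[of _ "\<lambda>_. True"]) (metis less_irrefl)
    then show False using nonbip by simp
  qed
qed

lemma mu_bounds:
  assumes d: "deg n A i > 0" and nonneg: "\<forall>j<n. A i j \<ge> 0"
    and bnd: "\<forall>j<n. lo \<le> \<beta> j \<and> \<beta> j \<le> hi"
  shows "lo \<le> mu n A \<beta> i \<and> mu n A \<beta> i \<le> hi"
proof -
  have s1: "lo * deg n A i \<le> (\<Sum>j<n. A i j * \<beta> j)"
    unfolding deg_def sum_distrib_left
  proof (intro sum_mono)
    fix j assume "j \<in> {..<n}"
    then have "lo \<le> \<beta> j" "0 \<le> A i j" using nonneg bnd by auto
    then show "lo * A i j \<le> A i j * \<beta> j" by (metis mult.commute mult_right_mono)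
  qed
  have s2: "(\<Sum>j<n. A i j * \<beta> j) \<le> hi * deg n A i"
    unfolding deg_def sum_distrib_left
  proof (intro sum_mono)
    fix j assume "j \<in> {..<n}"
    then have "\<beta> j \<le> hi" "0 \<le> A i j" using nonneg bnd by auto
    then show "A i j * \<beta> j \<le> hi * A i j" by (metis mult.commute mult_right_mono)
  qed
  show ?thesis using s1 s2 d unfolding mu_def by (simp add: field_simps)
qed

lemma fbias_bounds:
  assumes g: "\<gamma> > 0" and m0: "0 \<le> \<mu>" and m1: "\<mu> \<le> 1"
  shows "min \<gamma> (1/\<gamma>) * \<mu> \<le> fbias \<mu> \<gamma> \<and> min \<gamma> (1/\<gamma>) * (1 - \<mu>) \<le> 1 - fbias \<mu> \<gamma>"
proof -
  define D where "D = 1 + (\<gamma> - 1) * \<mu>"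
  define \<kappa> where "\<kappa> = min \<gamma> (1/\<gamma>)"
  have D: "D = (1 - \<mu>) + \<gamma> * \<mu>" unfolding D_def by (simp add: algebra_simps)
  have D0: "0 < D"
  proof (cases "\<mu> = 0")
    case True then show ?thesis unfolding D_def by simp
  next
    case False
    then have "0 < \<gamma> * \<mu>" using g m0 by simp
    then show ?thesis unfolding D using m1 by linarith
  qed
  have k: "\<kappa> * D \<le> \<gamma> \<and> \<kappa> * D \<le> 1"
  proof (cases "\<gamma> \<ge> 1")
    case True
    have "(\<gamma> - 1) * \<mu> \<le> (\<gamma> - 1) * 1" using True m1 by (intro mult_left_mono) auto
    then have Dg: "D \<le> \<gamma>" unfolding D_def by simp
    have "1/\<gamma> \<le> 1" using True by simp
    with True have "1/\<gamma> \<le> \<gamma>" by linarith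
    then have "\<kappa> = 1 / \<gamma>" unfolding \<kappa>_def by (simp add: min_absorb2)
    moreover have "\<gamma> * 1 \<le> \<gamma> * \<gamma>" using True by (intro mult_left_mono) auto
    ultimately have DD: "D \<le> \<gamma> * \<gamma>" and kk: "\<kappa> = 1 / \<gamma>" using Dg by linarith+
    show ?thesis unfolding kk using DD True g D0 Dg by (simp add: field_simps)
  next
    case False
    have "(\<gamma> - 1) * \<mu> \<le> 0" using False m0 by (intro mult_nonpos_nonneg) auto
    then have D1: "D \<le> 1" unfolding D_def by simp
    have "1 \<le> 1/\<gamma>" using False g by simp
    with False have "\<kappa> = \<gamma>" unfolding \<kappa>_def by simp
    moreover have "\<gamma> * D \<le> 1 * 1" using False g D0 D1 by (intro mult_mono) auto
    ultimately show ?thesis using mult_left_le[of D \<gamma>] g D1 by auto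
  qed
  have f: "fbias \<mu> \<gamma> = \<gamma> * \<mu> / D" unfolding fbias_def D_def by simp
  have f1: "1 - fbias \<mu> \<gamma> = (1 - \<mu>) / D" unfolding f using D0 by (simp add: field_simps D)
  have "\<kappa> * \<mu> = (\<kappa> * D) * \<mu> / D" using D0 by simp
  also have "\<dots> \<le> \<gamma> * \<mu> / D" using k m0 D0 by (intro divide_right_mono mult_right_mono) auto
  finally have A: "\<kappa> * \<mu> \<le> fbias \<mu> \<gamma>" unfolding f .
  have "\<kappa> * (1 - \<mu>) = (\<kappa> * D) * (1 - \<mu>) / D" using D0 by simp
  also have "\<dots> \<le> 1 * (1 - \<mu>) / D" using k m1 D0 by (intro divide_right_mono mult_right_mono) auto
  finally have B: "\<kappa> * (1 - \<mu>) \<le> 1 - fbias \<mu> \<gamma>" unfolding f1 by simp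
  show ?thesis using A B unfolding \<kappa>_def by simp
qed


lemma P_bound:
  fixes n :: nat and A :: "nat \<Rightarrow> nat \<Rightarrow> real" and \<gamma> b :: "nat \<Rightarrow> real"
  assumes nonneg: "\<forall>i<n. \<forall>j<n. A i j \<ge> 0"
    and conn: "graph_connected n A"
    and nonbip: "\<not> graph_bipartite n A"
    and gpos: "\<forall>i<n. \<gamma> i > 0"
    and binit: "\<forall>i<n. 0 < b i \<and> b i < 1"
    and i: "i < n"
  shows "\<exists>c. 0 < c \<and> c \<le> 1 \<and> (\<forall>h t v. 1 \<le> t \<longrightarrow> c / real t \<le>
     (if v then fbias (mu n A (\<lambda>k. beta b h k t) i) (\<gamma> i) else 1 - fbias (mu n A (\<lambda>k. beta b h k t) i) (\<gamma> i)))"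
proof -
  define bm where "bm = Min ((\<lambda>k. min (b k) (1 - b k)) ` {..<n})"
  have fin: "finite ((\<lambda>k. min (b k) (1 - b k)) ` {..<n})" "(\<lambda>k. min (b k) (1 - b k)) ` {..<n} \<noteq> {}"
    using i by auto
  have bm0: "0 < bm" unfolding bm_def using fin binit by (subst Min_gr_iff) auto
  have bmk: "bm \<le> min (b k) (1 - b k)" if "k < n" for k
    unfolding bm_def using fin that by (intro Min_le) auto
  have bm1: "bm \<le> 1" using bmk[OF i] binit i by auto
  define \<kappa> where "\<kappa> = min (\<gamma> i) (1 / \<gamma> i)"
  have g: "\<gamma> i > 0" using gpos i by auto
  have k0: "0 < \<kappa>" unfolding \<kappa>_def using g by simp
  have k1: "\<kappa> \<le> 1"
  proof (cases "\<gamma> i \<le> 1")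
    case True then show ?thesis unfolding \<kappa>_def by (simp add: min.coboundedI1)
  next
    case False then have "1 / \<gamma> i \<le> 1" by simp
    then show ?thesis unfolding \<kappa>_def by (simp add: min.coboundedI2)
  qed
  have d: "deg n A i > 0" by (rule deg_pos[OF nonneg conn nonbip i])
  show ?thesis
  proof (intro exI[of _ "\<kappa> * bm"] conjI allI impI)
    show "0 < \<kappa> * bm" using k0 bm0 by simp
    show "\<kappa> * bm \<le> 1" using k0 k1 bm0 bm1 by (simp add: mult_le_one)
    fix h t v assume t: "1 \<le> (t::nat)"
    then obtain t' where t': "t = Suc t'" by (cases t) auto
    define \<mu> where "\<mu> = mu n A (\<lambda>k. beta b h k t) i"
    have bb: "\<forall>j<n. bm / t \<le> beta b h j t \<and> beta b h j t \<le> 1 - bm / t"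
    proof (intro allI impI)
      fix j assume j: "j < n"
      have "bm \<le> b j" "b j \<le> 1 - bm" using bmk[OF j] by auto
      from beta_bounds[of bm b j, OF this less_imp_le[OF bm0], of t' h]
      show "bm / t \<le> beta b h j t \<and> beta b h j t \<le> 1 - bm / t" unfolding t' .
    qed
    have mb: "bm / t \<le> \<mu> \<and> \<mu> \<le> 1 - bm / t"
      unfolding \<mu>_def by (rule mu_bounds[OF d _ bb]) (use nonneg i in auto)
    have bt0: "0 \<le> bm / t" using bm0 by simp
    have fb: "\<kappa> * \<mu> \<le> fbias \<mu> (\<gamma> i) \<and> \<kappa> * (1 - \<mu>) \<le> 1 - fbias \<mu> (\<gamma> i)"
      unfolding \<kappa>_def by (rule fbias_bounds[OF g]) (use mb bt0 in auto)
    have "\<kappa> * (bm / t) \<le> \<kappa> * \<mu>" using mb k0 by (intro mult_left_mono) auto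
    moreover have "\<kappa> * (bm / t) \<le> \<kappa> * (1 - \<mu>)" using mb k0 by (intro mult_left_mono) auto
    ultimately show "\<kappa> * bm / real t \<le> (if v then fbias (mu n A (\<lambda>k. beta b h k t) i) (\<gamma> i) else 1 - fbias (mu n A (\<lambda>k. beta b h k t) i) (\<gamma> i))"
      using fb unfolding \<mu>_def[symmetric] by auto
  qed
qed

theorem lemma2:
  fixes M :: "'a measure"
    and n :: nat
    and A :: "nat \<Rightarrow> nat \<Rightarrow> real"
    and \<gamma> :: "nat \<Rightarrow> real"
    and b :: "nat \<Rightarrow> real"
    and \<psi> :: "nat \<Rightarrow> nat \<Rightarrow> 'a \<Rightarrow> bool"
  assumes "prob_space M"
    and sym: "\<forall>i<n. \<forall>j<n. A i j = A j i"
    and nonneg: "\<forall>i<n. \<forall>j<n. A i j \<ge> 0"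
    and conn: "graph_connected n A"
    and nonbip: "\<not> graph_bipartite n A"
    and gpos: "\<forall>i<n. \<gamma> i > 0"
    and gnotI: "\<exists>i<n. \<gamma> i \<noteq> 1"
    and binit: "\<forall>i<n. 0 < b i \<and> b i < 1"
    and meas: "\<forall>i<n. \<forall>t\<ge>2. \<psi> i t \<in> measurable M (count_space UNIV)"
    and dyn: "\<forall>t\<ge>1. \<forall>(h :: nat \<Rightarrow> nat \<Rightarrow> bool) (x :: nat \<Rightarrow> bool).
       measure M {\<omega> \<in> space M. (\<forall>s\<in>{2..t}. \<forall>j<n. \<psi> j s \<omega> = h j s)
                                  \<and> (\<forall>j<n. \<psi> j (t + 1) \<omega> = x j)}
       = measure M {\<omega> \<in> space M. \<forall>s\<in>{2..t}. \<forall>j<n. \<psi> j s \<omega> = h j s}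
         * (\<Prod>j<n. let p = fbias (mu n A (\<lambda>k. beta b h k t) j) (\<gamma> j)
                     in if x j then p else 1 - p)"
  shows "\<forall>i<n. AE \<omega> in M. infinite {t. \<psi> i t \<omega>} \<and> infinite {t. \<not> \<psi> i t \<omega>}"
  proof -
  have dm: "dynm M n \<psi> (\<lambda>h t j. fbias (mu n A (\<lambda>k. beta b h k t) j) (\<gamma> j))"
  proof (rule dynm.intro[OF assms(1)], rule dynm_axioms.intro)
    show "\<And>j t. j < n \<Longrightarrow> 2 \<le> t \<Longrightarrow> \<psi> j t \<in> measurable M (count_space UNIV)" using meas by auto
    show "\<And>t h x. 1 \<le> t \<Longrightarrow>
       measure M {\<omega> \<in> space M. (\<forall>s\<in>{2..t}. \<forall>j<n. \<psi> j s \<omega> = h j s)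
                                  \<and> (\<forall>j<n. \<psi> j (t + 1) \<omega> = x j)}
       = measure M {\<omega> \<in> space M. \<forall>s\<in>{2..t}. \<forall>j<n. \<psi> j s \<omega> = h j s}
         * (\<Prod>j<n. if x j then fbias (mu n A (\<lambda>k. beta b h k t) j) (\<gamma> j) else 1 - fbias (mu n A (\<lambda>k. beta b h k t) j) (\<gamma> j))"
      using dyn by (simp add: Let_def)
  qed
  show ?thesis
  proof (intro allI impI)
    fix i assume i: "i < n"
    obtain c where c0: "0 < c" and c1: "c \<le> 1" and cP: "\<forall>h t v. 1 \<le> t \<longrightarrow> c / real t \<le>
     (if v then fbias (mu n A (\<lambda>k. beta b h k t) i) (\<gamma> i) else 1 - fbias (mu n A (\<lambda>k. beta b h k t) i) (\<gamma> i))"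
      using P_bound[OF nonneg conn nonbip gpos binit i] by blast
    have cP': "\<And>h t v. 1 \<le> t \<Longrightarrow> c / real t \<le>
     (if v then fbias (mu n A (\<lambda>k. beta b h k t) i) (\<gamma> i) else 1 - fbias (mu n A (\<lambda>k. beta b h k t) i) (\<gamma> i))"
      using cP by blast
    have a1: "AE \<omega> in M. infinite {t. \<psi> i t \<omega> = True}"
      by (rule dynm.AE_inf[OF dm i c0 c1 cP'])
    have a2: "AE \<omega> in M. infinite {t. \<psi> i t \<omega> = False}"
      by (rule dynm.AE_inf[OF dm i c0 c1 cP'])
    show "AE \<omega> in M. infinite {t. \<psi> i t \<omega>} \<and> infinite {t. \<not> \<psi> i t \<omega>}"
      using a1 a2 by eventually_elim simp
  qed
qed

end
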